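(* Let $\beta \in \mathbb{C}$. Then for every $\alpha \in \mathbb{C}$, \[ p_\beta(\beta\alpha) = p_\beta(\beta\alpha - 1) + p_\beta(\alpha) \] (as an identity in $\mathbb{Z}_{\geq 0}\cup\{\infty\}$).
   Context: For $\beta, \alpha \in \mathbb{C}$, $p_\beta(\alpha) \in \mathbb{Z}_{\geq 0}\cup\{\infty\}$ is the number of polynomials $f \in \mathbb{Z}_{\geq 0}[x]$ (non-negative integer coefficients) with $f(\beta) = \alpha$. *)

theory Defs
  imports Complex_Main "HOL-Computational_Algebra.Polynomial" "HOL-Library.Extended_Nat"
begin

text \<open>Polynomials with non-negative integer coefficients are modelled as nat poly;
  evaluation at a complex number goes through the coefficient map of_nat.\<close>

definition rep_set :: "complex \<Rightarrow> complex \<Rightarrow> nat poly set" where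
  "rep_set \<beta> \<alpha> = {f :: nat poly. poly (map_poly of_nat f) \<beta> = \<alpha>}"

definition p :: "complex \<Rightarrow> complex \<Rightarrow> enat" where
  "p \<beta> \<alpha> = (if finite (rep_set \<beta> \<alpha>) then enat (card (rep_set \<beta> \<alpha>)) else \<infinity>)"

end

theory Submission
  imports Defs
begin

definition ecard :: "'a set \<Rightarrow> enat" where
  "ecard S = (if finite S then enat (card S) else \<infinity>)"

lemma ecard_Un: "A \<inter> B = {} \<Longrightarrow> ecard (A \<union> B) = ecard A + ecard B"
  by (auto simp: ecard_def card_Un_disjoint)

lemma ecard_image: "inj f \<Longrightarrow> ecard (f ` A) = ecard A"
  by (auto simp: ecard_def card_image finite_image_iff inj_on_subset[of f UNIV])

lemma p_ecard: "p b a = ecard (rep_set b a)"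
  by (simp add: p_def ecard_def)

lemma ev_pCons: "poly (map_poly (of_nat :: nat \<Rightarrow> complex) (pCons a h)) x
   = of_nat a + x * poly (map_poly of_nat h) x"
  by (auto simp: map_poly_pCons)

lemma ev_plus1: "poly (map_poly (of_nat :: nat \<Rightarrow> complex) (g + 1)) x
   = poly (map_poly of_nat g) x + 1"
proof -
  obtain a h where g: "g = pCons a h" by (cases g) auto
  have "g + 1 = pCons (a+1) h" by (simp add: g one_pCons)
  then show ?thesis by (simp add: ev_pCons g)
qed

theorem proposition4:
  fixes \<beta> \<alpha> :: complex
  assumes "\<beta> \<noteq> 0"
  shows "p \<beta> (\<beta> * \<alpha>) = p \<beta> (\<beta> * \<alpha> - 1) + p \<beta> \<alpha>"
proof -
  have eq: "rep_set \<beta> (\<beta> * \<alpha>) = (\<lambda>g. g + 1) ` rep_set \<beta> (\<beta> * \<alpha> - 1) \<union> pCons 0 ` rep_set \<beta> \<alpha>"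
  proof (intro equalityI subsetI)
    fix f assume f: "f \<in> rep_set \<beta> (\<beta> * \<alpha>)"
    obtain a h where fh: "f = pCons a h" by (cases f) auto
    show "f \<in> (\<lambda>g. g + 1) ` rep_set \<beta> (\<beta> * \<alpha> - 1) \<union> pCons 0 ` rep_set \<beta> \<alpha>"
    proof (cases a)
      case 0
      then have "h \<in> rep_set \<beta> \<alpha>" using f fh assms by (simp add: rep_set_def ev_pCons)
      then show ?thesis using fh 0 by auto
    next
      case (Suc b)
      have "f = pCons b h + 1" using fh Suc by (simp add: one_pCons)
      moreover have "pCons b h \<in> rep_set \<beta> (\<beta> * \<alpha> - 1)"
        using f fh Suc by (simp add: rep_set_def ev_pCons algebra_simps)
      ultimately show ?thesis by blast
    qed
  next
    fix f assume "f \<in> (\<lambda>g. g + 1) ` rep_set \<beta> (\<beta> * \<alpha> - 1) \<union> pCons 0 ` rep_set \<beta> \<alpha>"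
    then show "f \<in> rep_set \<beta> (\<beta> * \<alpha>)"
      by (auto simp: rep_set_def ev_plus1 ev_pCons)
  qed
  have disj: "(\<lambda>g. g + 1) ` rep_set \<beta> (\<beta> * \<alpha> - 1) \<inter> pCons 0 ` rep_set \<beta> \<alpha> = {}"
  proof -
    have "coeff (g + 1) 0 \<noteq> coeff (pCons 0 h) 0" for g h :: "nat poly" by simp
    then show ?thesis by (auto simp del: coeff_add coeff_pCons_0) (metis)
  qed
  have i1: "inj (\<lambda>g::nat poly. g + 1)" by (auto intro: injI)
  have i2: "inj (pCons (0::nat))" by (auto intro: injI)
  show ?thesis
    unfolding p_ecard eq ecard_Un[OF disj] ecard_image[OF i1] ecard_image[OF i2] ..
qed

end
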